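(* For $m,n\in \mathbb{Z}_{>1}$, \begin{align*} \zeta(m,n)=P(m,n), \end{align*} where \begin{align*} P(m,n):=&\sum^{m-1}_{i=0}(-1)^{i}\binom{n+i-1}{i}\zeta(n+i)\zeta_{\sqcup\!\sqcup}(m-i)\\ &\ +(-1)^{m}\sum^{n-1}_{j=0}\binom{m+j-1}{j}\Bigl\{\zeta(m+j)\zeta_{\sqcup\!\sqcup}(n-j)-\zeta^{\star}(n-j,m+j)\Bigr\}. \end{align*}
   Context: For $n\in\mathbb{Z}_{>0}$, $m\in\mathbb{Z}_{>1}$: $\zeta(m)=\sum_{k\ge1}k^{-m}$, the double zeta value $\zeta(n,m)=\sum_{0<k_1<k_2}k_1^{-n}k_2^{-m}$, and the double zeta star value $\zeta^\star(n,m)=\sum_{0<k_1\le k_2}k_1^{-n}k_2^{-m}=\zeta(n,m)+\zeta(m+n)$. The shuffle regularized values $\zeta_{\sqcup\!\sqcup}(m)\in\mathbb{R}[T]$ (for $m\in\mathbb{Z}_{>0}$) are defined as follows: as $\epsilon\to0$, $\sum_{k>0}(1-\epsilon)^k/k^m\sim c_0+c_1(-\log\epsilon)$ with $c_i\in\mathbb{R}$, and $\zeta_{\sqcup\!\sqcup}(m):=c_0+c_1T$. In particular $\zeta_{\sqcup\!\sqcup}(1)=T$ and $\zeta_{\sqcup\!\sqcup}(m)=\zeta(m)$ for $m>1$. The identity is an equality in $\mathbb{R}[T]$ (the $T$-terms cancel). *)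

theory Defs
  imports "HOL-Analysis.Analysis" "HOL-Computational_Algebra.Polynomial"
begin

definition zeta :: "nat \<Rightarrow> real" where
  "zeta m = (\<Sum>k. 1 / real (Suc k) ^ m)"

definition double_zeta :: "nat \<Rightarrow> nat \<Rightarrow> real" where
  "double_zeta n m = infsum (\<lambda>(k1, k2). 1 / (real k1 ^ n * real k2 ^ m))
      {(k1::nat, k2::nat). 0 < k1 \<and> k1 < k2}"

definition double_zeta_star :: "nat \<Rightarrow> nat \<Rightarrow> real" where
  "double_zeta_star n m = infsum (\<lambda>(k1, k2). 1 / (real k1 ^ n * real k2 ^ m))
      {(k1::nat, k2::nat). 0 < k1 \<and> k1 \<le> k2}"

text \<open>Shuffle regularized zeta value in R[T]: the polynomial c0 + c1 T (degree at most 1)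
  such that sum_{k>0} (1-eps)^k / k^m - (c0 + c1 (-log eps)) tends to 0 as eps -> 0+.\<close>
definition zeta_sh :: "nat \<Rightarrow> real poly" where
  "zeta_sh m = (THE p. degree p \<le> 1 \<and>
      ((\<lambda>\<epsilon>::real. (\<Sum>k. (1 - \<epsilon>) ^ Suc k / real (Suc k) ^ m) - poly p (- ln \<epsilon>))
        \<longlongrightarrow> 0) (at_right 0))"

end

theory Submission
  imports Defs "HOL-Real_Asymp.Real_Asymp"
begin


lemma zeta_sh_unique_aux:
  fixes r :: "real poly"
  assumes "degree r \<le> 1" and "((\<lambda>\<epsilon>::real. poly r (- ln \<epsilon>)) \<longlongrightarrow> 0) (at_right 0)"
  shows "r = 0"
proof -
  have e: "filterlim (\<lambda>t::real. exp (-t)) (at_right 0) at_top" by real_asymp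
  have "((\<lambda>t. poly r (- ln (exp (-t)))) \<longlongrightarrow> 0) at_top"
    using filterlim_compose[OF assms(2) e] by (simp add: o_def)
  hence L: "((\<lambda>t. poly r t) \<longlongrightarrow> 0) at_top" by simp
  have s: "filterlim (\<lambda>t::real. t + 1) at_top at_top" by real_asymp
  have L1: "((\<lambda>t. poly r (t+1)) \<longlongrightarrow> 0) at_top"
    using filterlim_compose[OF L s] by (simp add: o_def)
  obtain a b where r: "r = [:a, b:]"
  proof
    show "r = [:coeff r 0, coeff r 1:]"
      using assms(1) by (auto simp: poly_eq_iff coeff_pCons split: nat.split intro: coeff_eq_0)
  qed
  have "((\<lambda>t. poly r (t+1) - poly r t) \<longlongrightarrow> 0 - 0) at_top"
    by (intro tendsto_diff L1 L)
  hence "((\<lambda>t::real. b) \<longlongrightarrow> 0) at_top" by (simp add: r algebra_simps)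
  hence c1: "b = 0" by (simp add: tendsto_const_iff)
  from L have "((\<lambda>t::real. a) \<longlongrightarrow> 0) at_top" by (simp add: r c1)
  hence c0: "a = 0" by (simp add: tendsto_const_iff)
  show ?thesis by (simp add: r c0 c1)
qed

lemma zeta_sh_eqI:
  assumes "degree p \<le> 1"
    and "((\<lambda>\<epsilon>::real. (\<Sum>k. (1 - \<epsilon>) ^ Suc k / real (Suc k) ^ m) - poly p (- ln \<epsilon>)) \<longlongrightarrow> 0) (at_right 0)"
  shows "zeta_sh m = p"
  unfolding zeta_sh_def
proof (rule the_equality)
  show "degree p \<le> 1 \<and> ((\<lambda>\<epsilon>::real. (\<Sum>k. (1 - \<epsilon>) ^ Suc k / real (Suc k) ^ m) - poly p (- ln \<epsilon>)) \<longlongrightarrow> 0) (at_right 0)"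
    using assms by blast
next
  fix q :: "real poly"
  assume q: "degree q \<le> 1 \<and> ((\<lambda>\<epsilon>::real. (\<Sum>k. (1 - \<epsilon>) ^ Suc k / real (Suc k) ^ m) - poly q (- ln \<epsilon>)) \<longlongrightarrow> 0) (at_right 0)"
  have "degree (p - q) \<le> 1" using assms(1) q by (meson degree_diff_le)
  moreover have "((\<lambda>\<epsilon>::real. poly (p - q) (- ln \<epsilon>)) \<longlongrightarrow> 0) (at_right 0)"
  proof -
    have "((\<lambda>\<epsilon>::real. ((\<Sum>k. (1 - \<epsilon>) ^ Suc k / real (Suc k) ^ m) - poly q (- ln \<epsilon>))
         - ((\<Sum>k. (1 - \<epsilon>) ^ Suc k / real (Suc k) ^ m) - poly p (- ln \<epsilon>))) \<longlongrightarrow> 0 - 0) (at_right 0)"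
      using q assms(2) by (intro tendsto_diff) auto
    thus ?thesis by (simp add: poly_diff)
  qed
  ultimately have "p - q = 0" by (rule zeta_sh_unique_aux)
  thus "q = p" by simp
qed

lemma zeta_sh_1: "zeta_sh 1 = [:0, 1:]"
proof (rule zeta_sh_eqI)
  show "degree [:0, 1::real:] \<le> 1" by simp
  have "eventually (\<lambda>\<epsilon>::real. \<epsilon> \<in> {0<..<1}) (at_right 0)"
    by (intro eventually_at_right_real) auto
  hence "eventually (\<lambda>\<epsilon>::real. (\<Sum>k. (1 - \<epsilon>) ^ Suc k / real (Suc k) ^ 1) - poly [:0, 1:] (- ln \<epsilon>) = 0) (at_right 0)"
  proof (rule eventually_mono)
    fix \<epsilon> :: real assume e: "\<epsilon> \<in> {0<..<1}"
    have "ln \<epsilon> = (\<Sum> n. (-1)^n * (1 / real (n + 1)) * (\<epsilon> - 1)^(Suc n))"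
      using e by (intro ln_series) auto
    also have "\<dots> = (\<Sum> n. - ((1 - \<epsilon>) ^ Suc n / real (Suc n) ^ 1))"
    proof (rule suminf_cong)
      fix n
      have h0: "(-1)^n * (\<epsilon> - 1)^n = (1 - \<epsilon>)^n" by (simp flip: power_mult_distrib)
      have h: "(-1)^n * (\<epsilon> - 1)^(Suc n) = - ((1 - \<epsilon>)^Suc n)"
        by (metis h0 power_Suc minus_diff_eq mult_minus_left mult.assoc mult.commute)
      have "(-1)^n * (1 / real (n + 1)) * (\<epsilon> - 1)^(Suc n) = ((-1)^n * (\<epsilon> - 1)^(Suc n)) / real (Suc n)"
        by simp
      also have "\<dots> = - ((1 - \<epsilon>) ^ Suc n / real (Suc n) ^ 1)" by (simp only: h) simp
      finally show "(-1)^n * (1 / real (n + 1)) * (\<epsilon> - 1)^(Suc n) = - ((1 - \<epsilon>) ^ Suc n / real (Suc n) ^ 1)" .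
    qed
    also have "\<dots> = - (\<Sum> n. (1 - \<epsilon>) ^ Suc n / real (Suc n) ^ 1)"
    proof (rule suminf_minus)
      show "summable (\<lambda>n. (1 - \<epsilon>) ^ Suc n / real (Suc n) ^ 1)"
      proof (rule summable_comparison_test')
        show "summable (\<lambda>n. (1 - \<epsilon>) ^ n)" using e by (intro summable_geometric) auto
        fix n :: nat
        have "(1 - \<epsilon>) ^ Suc n \<le> (1 - \<epsilon>) ^ n" using e by (intro power_decreasing) auto
        moreover have "(1 - \<epsilon>) ^ Suc n / real (Suc n) \<le> (1 - \<epsilon>) ^ Suc n"
        proof -
          have "(1 - \<epsilon>) ^ Suc n / real (Suc n) \<le> (1 - \<epsilon>) ^ Suc n / 1"
            using e by (intro divide_left_mono) auto
          thus ?thesis by simp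
        qed
        ultimately have "(1 - \<epsilon>) ^ Suc n / real (Suc n) \<le> (1 - \<epsilon>) ^ n" by linarith
        moreover have "norm ((1 - \<epsilon>) ^ Suc n / real (Suc n) ^ 1) = (1 - \<epsilon>) ^ Suc n / real (Suc n)"
          using e by simp
        ultimately show "norm ((1 - \<epsilon>) ^ Suc n / real (Suc n) ^ 1) \<le> (1 - \<epsilon>) ^ n"
          by linarith
      qed
    qed
    finally show "(\<Sum>k. (1 - \<epsilon>) ^ Suc k / real (Suc k) ^ 1) - poly [:0, 1:] (- ln \<epsilon>) = 0" by simp
  qed
  thus "((\<lambda>\<epsilon>::real. (\<Sum>k. (1 - \<epsilon>) ^ Suc k / real (Suc k) ^ 1) - poly [:0, 1:] (- ln \<epsilon>)) \<longlongrightarrow> 0) (at_right 0)"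
    by (rule tendsto_eventually)
qed
lemma summable_zeta_terms:
  assumes "m \<ge> 2"
  shows "summable (\<lambda>k. 1 / real (Suc k) ^ m)"
proof -
  have "summable (\<lambda>k. inverse (real k ^ m))"
    using inverse_power_summable[OF assms] by simp
  hence "summable (\<lambda>k. inverse (real (Suc k) ^ m))"
    by (subst summable_Suc_iff)
  thus ?thesis by (simp add: divide_inverse)
qed

lemma zeta_sh_ge2:
  assumes "m \<ge> 2"
  shows "zeta_sh m = [:zeta m:]"
proof (rule zeta_sh_eqI)
  show "degree [:zeta m:] \<le> 1" by simp
  define h where "h x = (\<Sum>k. x ^ Suc k / real (Suc k) ^ m)" for x :: real
  have ul: "uniform_limit {0..1} (\<lambda>n x. \<Sum>k<n. x ^ Suc k / real (Suc k) ^ m)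
        (\<lambda>x. \<Sum>k. x ^ Suc k / real (Suc k) ^ m) sequentially"
  proof (rule Weierstrass_m_test)
    show "summable (\<lambda>k. 1 / real (Suc k) ^ m)" using assms by (rule summable_zeta_terms)
    fix k :: nat and x :: real assume x: "x \<in> {0..1}"
    have "x ^ Suc k \<le> 1" using x by (intro power_le_one) auto
    moreover have "0 \<le> x ^ Suc k" using x by simp
    ultimately show "norm (x ^ Suc k / real (Suc k) ^ m) \<le> 1 / real (Suc k) ^ m"
      by (simp add: divide_right_mono)
  qed
  have "continuous_on {0..1} h"
    unfolding h_def
    by (rule uniform_limit_theorem[OF _ ul]) (auto intro!: always_eventually continuous_intros)
  hence c: "(h \<longlongrightarrow> h 1) (at 1 within {0..1})"
    by (simp add: continuous_on_def)
  have g: "filterlim (\<lambda>\<epsilon>::real. 1 - \<epsilon>) (at 1 within {0..1}) (at_right 0)"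
  proof (subst filterlim_at, intro conjI)
    have "eventually (\<lambda>\<epsilon>::real. \<epsilon> \<in> {0<..<1}) (at_right 0)"
      by (intro eventually_at_right_real) auto
    thus "eventually (\<lambda>\<epsilon>::real. 1 - \<epsilon> \<in> {0..1} \<and> 1 - \<epsilon> \<noteq> 1) (at_right 0)"
      by (rule eventually_mono) auto
    have "((\<lambda>\<epsilon>::real. 1 - \<epsilon>) \<longlongrightarrow> 1 - 0) (at_right 0)"
      by (intro tendsto_intros)
    thus "((\<lambda>\<epsilon>::real. 1 - \<epsilon>) \<longlongrightarrow> 1) (at_right 0)" by simp
  qed
  have "((\<lambda>\<epsilon>. h (1 - \<epsilon>)) \<longlongrightarrow> h 1) (at_right 0)"
    using filterlim_compose[OF c g] by (simp add: o_def)
  moreover have "h 1 = zeta m" by (simp add: h_def zeta_def)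
  ultimately have "((\<lambda>\<epsilon>. h (1 - \<epsilon>) - zeta m) \<longlongrightarrow> zeta m - zeta m) (at_right 0)"
    by (intro tendsto_intros) auto
  thus "((\<lambda>\<epsilon>::real. (\<Sum>k. (1 - \<epsilon>) ^ Suc k / real (Suc k) ^ m) - poly [:zeta m:] (- ln \<epsilon>)) \<longlongrightarrow> 0) (at_right 0)"
    by (simp add: h_def)
qed



lemma pf_aux:
  fixes w :: real
  shows "(\<Sum>j<n. real ((M + j) choose j) * w ^ j) - (1 - w) * (\<Sum>j<n. real ((Suc M + j) choose j) * w ^ j)
     = real ((M + n) choose Suc M) * w ^ n"
proof (induction n)
  case 0
  then show ?case by simp
next
  case (Suc n)
  have pas: "real ((Suc M + n) choose n) = real ((M + n) choose n) + real ((M + n) choose Suc M)"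
  proof (cases n)
    case 0 then show ?thesis by simp
  next
    case (Suc k)
    have "(Suc M + n) choose n = ((M + n) choose n) + ((M + n) choose k)"
      using Suc by (simp add: choose_reduce_nat)
    moreover have "(M + n) choose k = (M + n) choose Suc M"
      using Suc binomial_symmetric[of k "M+n"] by simp
    ultimately show ?thesis by simp
  qed
  have sym: "(Suc M + n) choose n = (M + Suc n) choose Suc M"
    using binomial_symmetric[of n "Suc M + n"] by simp
  show ?case
    using Suc.IH pas sym by (simp add: algebra_simps)
qed

lemma pf_ident:
  fixes v w :: real
  assumes "v + w = 1" and "n \<ge> 1"
  shows "(\<Sum>i<Suc M. real ((n + i - 1) choose i) * v ^ i * w ^ n)
       + (\<Sum>j<n. real ((M + j) choose j) * v ^ Suc M * w ^ j) = 1"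
proof (induction M)
  case 0
  have "(\<Sum>j<n. real ((0 + j) choose j) * v ^ Suc 0 * w ^ j) = (1 - w) * (\<Sum>j<n. w ^ j)"
  proof -
    have v: "v = 1 - w" using assms(1) by simp
    show ?thesis by (simp add: v sum_distrib_left)
  qed
  also have "\<dots> = 1 - w ^ n" by (simp add: one_diff_power_eq)
  finally show ?case by simp
next
  case (Suc M)
  have v: "v = 1 - w" using assms(1) by simp
  have "(\<Sum>j<n. real ((M + j) choose j) * v ^ Suc M * w ^ j)
        - (\<Sum>j<n. real ((Suc M + j) choose j) * v ^ Suc (Suc M) * w ^ j)
      = v ^ Suc M * ((\<Sum>j<n. real ((M + j) choose j) * w ^ j) - (1 - w) * (\<Sum>j<n. real ((Suc M + j) choose j) * w ^ j))"
    by (simp add: sum_distrib_left algebra_simps v)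
  also have "\<dots> = v ^ Suc M * (real ((M + n) choose Suc M) * w ^ n)"
    by (simp only: pf_aux)
  finally have D: "(\<Sum>j<n. real ((M + j) choose j) * v ^ Suc M * w ^ j)
        - (\<Sum>j<n. real ((Suc M + j) choose j) * v ^ Suc (Suc M) * w ^ j)
      = v ^ Suc M * (real ((M + n) choose Suc M) * w ^ n)" .
  have e: "n + Suc M - 1 = M + n" using assms(2) by simp
  have "(\<Sum>i<Suc (Suc M). real ((n + i - 1) choose i) * v ^ i * w ^ n)
      = (\<Sum>i<Suc M. real ((n + i - 1) choose i) * v ^ i * w ^ n) + real ((M + n) choose Suc M) * v ^ Suc M * w ^ n"
    by (simp only: sum.lessThan_Suc e)
  with Suc.IH D show ?case by (simp add: algebra_simps)
qed

lemma partial_fraction: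
  fixes x d :: real
  assumes x: "x > 0" and d: "d > 0" and m: "m \<ge> 1" and n: "n \<ge> 1"
  shows "1 / (x ^ m * (x + d) ^ n) =
    (\<Sum>i<m. (-1) ^ i * real ((n + i - 1) choose i) / (d ^ (n + i) * x ^ (m - i)))
    + (-1) ^ m * (\<Sum>j<n. real ((m + j - 1) choose j) / (d ^ (m + j) * (x + d) ^ (n - j)))"
proof -
  obtain M where M: "m = Suc M" using m by (cases m) auto
  define v where "v = - x / d"
  define w where "w = (x + d) / d"
  have vw: "v + w = 1" using d by (simp add: v_def w_def field_simps)
  have y: "x + d > 0" using x d by simp
  have I: "(\<Sum>i<m. real ((n + i - 1) choose i) * v ^ i * w ^ n)
       + (\<Sum>j<n. real ((m - 1 + j) choose j) * v ^ m * w ^ j) = 1"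
    using pf_ident[OF vw n, of M] by (simp add: M)
  have t1: "real ((n + i - 1) choose i) * v ^ i * w ^ n / (x ^ m * (x + d) ^ n)
      = (-1) ^ i * real ((n + i - 1) choose i) / (d ^ (n + i) * x ^ (m - i))" if "i < m" for i
  proof -
    have xm: "x ^ m = x ^ i * x ^ (m - i)" using that by (simp flip: power_add)
    have vi: "v ^ i = (-1) ^ i * x ^ i / d ^ i" unfolding v_def
      by (metis mult_minus1 minus_divide_left power_mult_distrib power_divide times_divide_eq_right)
    have wn: "w ^ n = (x + d) ^ n / d ^ n" unfolding w_def by (simp add: power_divide)
    show ?thesis unfolding vi wn using x d y by (simp add: xm power_add field_simps)
  qed
  have t2: "real ((m - 1 + j) choose j) * v ^ m * w ^ j / (x ^ m * (x + d) ^ n)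
      = (-1) ^ m * (real ((m + j - 1) choose j) / (d ^ (m + j) * (x + d) ^ (n - j)))" if "j < n" for j
  proof -
    have yn: "(x + d) ^ n = (x + d) ^ j * (x + d) ^ (n - j)" using that by (simp flip: power_add)
    have vm: "v ^ m = (-1) ^ m * x ^ m / d ^ m" unfolding v_def
      by (metis mult_minus1 minus_divide_left power_mult_distrib power_divide times_divide_eq_right)
    have wj: "w ^ j = (x + d) ^ j / d ^ j" unfolding w_def by (simp add: power_divide)
    have yn': "(d + x) ^ j * (d + x) ^ (n - j) = (d + x) ^ n" using that by (simp flip: power_add)
    have e: "m - 1 + j = m + j - 1" using m by simp
    show ?thesis unfolding vm wj e using x d y by (simp add: yn' power_add field_simps)
  qed
  have "1 / (x ^ m * (x + d) ^ n) = ((\<Sum>i<m. real ((n + i - 1) choose i) * v ^ i * w ^ n)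
       + (\<Sum>j<n. real ((m - 1 + j) choose j) * v ^ m * w ^ j)) / (x ^ m * (x + d) ^ n)"
    by (simp only: I)
  also have "\<dots> = (\<Sum>i<m. real ((n + i - 1) choose i) * v ^ i * w ^ n / (x ^ m * (x + d) ^ n))
       + (\<Sum>j<n. real ((m - 1 + j) choose j) * v ^ m * w ^ j / (x ^ m * (x + d) ^ n))"
    by (simp add: add_divide_distrib sum_divide_distrib)
  also have "\<dots> = (\<Sum>i<m. (-1) ^ i * real ((n + i - 1) choose i) / (d ^ (n + i) * x ^ (m - i)))
    + (\<Sum>j<n. (-1) ^ m * (real ((m + j - 1) choose j) / (d ^ (m + j) * (x + d) ^ (n - j))))"
    using t1 t2 by (intro arg_cong2[where f="(+)"] sum.cong) auto
  finally show ?thesis by (simp add: sum_distrib_left)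
qed


lemma has_sum_sum_fin:
  fixes f :: "'i \<Rightarrow> 'a \<Rightarrow> real"
  assumes "finite I" and "\<And>i. i \<in> I \<Longrightarrow> (f i has_sum s i) A"
  shows "((\<lambda>x. \<Sum>i\<in>I. f i x) has_sum (\<Sum>i\<in>I. s i)) A"
  using assms
proof (induction I rule: finite_induct)
  case empty
  then show ?case by simp
next
  case (insert a I)
  have "((\<lambda>x. f a x + (\<Sum>i\<in>I. f i x)) has_sum (s a + (\<Sum>i\<in>I. s i))) A"
    using insert by (intro has_sum_add) auto
  thus ?case using insert by simp
qed

lemma zeta_has_sum:
  assumes "p \<ge> 2"
  shows "((\<lambda>k::nat. 1 / real k ^ p) has_sum zeta p) {0<..}"
proof -
  have s: "summable (\<lambda>k. 1 / real (Suc k) ^ p)" using assms by (rule summable_zeta_terms)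
  hence "(\<lambda>k. 1 / real (Suc k) ^ p) sums zeta p" unfolding zeta_def by (rule summable_sums)
  hence "((\<lambda>k. 1 / real (Suc k) ^ p) has_sum zeta p) UNIV"
    using s by (intro norm_summable_imp_has_sum) auto
  moreover have "bij_betw Suc UNIV {0<..}"
    by (rule bij_betwI[where g="\<lambda>k. k - 1"]) auto
  ultimately show ?thesis
    using has_sum_reindex_bij_betw[of Suc UNIV "{0<..}" "\<lambda>k::nat. 1 / real k ^ p"] by simp
qed

lemma prod_has_sum:
  assumes "p \<ge> 2" "q \<ge> 2"
  shows "((\<lambda>(a,b). 1 / (real a ^ q * real b ^ p)) has_sum zeta q * zeta p) ({0<..} \<times> {0<..})"
proof -
  have fib: "((\<lambda>b. 1 / (real a ^ q * real b ^ p)) has_sum (zeta p * (1 / real a ^ q))) {0<..}" for a :: nat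
  proof -
    have "((\<lambda>b. (1 / real a ^ q) * (1 / real b ^ p)) has_sum ((1 / real a ^ q) * zeta p)) {0<..}"
      by (intro has_sum_cmult_right zeta_has_sum assms)
    thus ?thesis by (simp add: mult.commute)
  qed
  have out: "((\<lambda>a::nat. zeta p * (1 / real a ^ q)) has_sum (zeta p * zeta q)) {0<..}"
    by (intro has_sum_cmult_right zeta_has_sum assms)
  have "(\<lambda>(a,b). 1 / (real a ^ q * real b ^ p)) summable_on Sigma {0<..} (\<lambda>_::nat. {0::nat<..})"
    by (rule summable_on_SigmaI[OF _ has_sum_imp_summable[OF out]]) (use fib in auto)
  hence "((\<lambda>(a,b). 1 / (real a ^ q * real b ^ p)) has_sum (zeta p * zeta q)) (Sigma {0<..} (\<lambda>_::nat. {0::nat<..}))"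
    by (intro has_sum_SigmaI[OF _ out]) (use fib in auto)
  thus ?thesis by (simp add: mult.commute)
qed

lemma stuffle:
  assumes "p \<ge> 2" "q \<ge> 2"
  shows "double_zeta q p + double_zeta_star p q = zeta q * zeta p"
    and "((\<lambda>(k1,k2). 1 / (real k1 ^ q * real k2 ^ p)) has_sum double_zeta q p) {(k1::nat, k2::nat). 0 < k1 \<and> k1 < k2}"
proof -
  define F where "F = (\<lambda>(a::nat,b::nat). 1 / (real a ^ q * real b ^ p))"
  define A1 where "A1 = {(k1::nat, k2::nat). 0 < k1 \<and> k1 < k2}"
  define A2 where "A2 = {(a::nat, b::nat). 0 < b \<and> b \<le> a}"
  have ps: "(F has_sum zeta q * zeta p) ({0<..} \<times> {0<..})"
    unfolding F_def by (rule prod_has_sum[OF assms])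
  have U: "{0<..} \<times> {0<..} = A1 \<union> A2" by (auto simp: A1_def A2_def)
  have s1: "F summable_on A1"
    by (rule summable_on_subset_banach[OF has_sum_imp_summable[OF ps]]) (auto simp: A1_def)
  have s2: "F summable_on A2"
    by (rule summable_on_subset_banach[OF has_sum_imp_summable[OF ps]]) (auto simp: A2_def)
  have h1: "(F has_sum double_zeta q p) A1"
    using s1 by (simp add: double_zeta_def F_def A1_def)
  have b: "bij_betw (\<lambda>(a,b). (b,a)) A2 {(k1::nat, k2::nat). 0 < k1 \<and> k1 \<le> k2}"
    by (rule bij_betwI[where g="\<lambda>(a,b). (b,a)"]) (auto simp: A2_def)
  have "double_zeta_star p q = infsum (\<lambda>x. (\<lambda>(k1, k2). 1 / (real k1 ^ p * real k2 ^ q)) ((\<lambda>(a,b). (b,a)) x)) A2"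
    unfolding double_zeta_star_def by (rule infsum_reindex_bij_betw[OF b, symmetric])
  also have "\<dots> = infsum F A2"
    by (rule infsum_cong) (auto simp: F_def mult.commute)
  finally have h2: "(F has_sum double_zeta_star p q) A2"
    using s2 by simp
  have "(F has_sum (double_zeta q p + double_zeta_star p q)) (A1 \<union> A2)"
    by (rule has_sum_Un_disjoint[OF h1 h2]) (auto simp: A1_def A2_def)
  with ps U show "double_zeta q p + double_zeta_star p q = zeta q * zeta p"
    using has_sum_unique by metis
  show "((\<lambda>(k1,k2). 1 / (real k1 ^ q * real k2 ^ p)) has_sum double_zeta q p) {(k1::nat, k2::nat). 0 < k1 \<and> k1 < k2}"
    using h1 by (simp add: F_def A1_def)
qed

lemma P2_has_sum:
  assumes "p \<ge> 2" "q \<ge> 2"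
  shows "((\<lambda>(d,k). 1 / (real d ^ q * real (k + d) ^ p)) has_sum double_zeta q p) ({0<..} \<times> {0<..})"
proof -
  have b: "bij_betw (\<lambda>(d,k). (d, k + d)) ({0<..} \<times> {0<..}) {(k1::nat, k2::nat). 0 < k1 \<and> k1 < k2}"
    by (rule bij_betwI[where g="\<lambda>(a,b). (a, b - a)"]) auto
  show ?thesis
    using has_sum_reindex_bij_betw[OF b, of "\<lambda>(k1,k2). 1 / (real k1 ^ q * real k2 ^ p)"] stuffle(2)[OF assms]
    by (simp add: case_prod_unfold)
qed

definition Hn :: "nat \<Rightarrow> real" where "Hn d = (\<Sum>i<d. 1 / real (Suc i))"

lemma Hn_le: "Hn d \<le> real d"
proof -
  have "Hn d \<le> (\<Sum>i<d. 1)" unfolding Hn_def by (intro sum_mono) auto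
  thus ?thesis by simp
qed

lemma Hn_nonneg: "Hn d \<ge> 0"
  unfolding Hn_def by (intro sum_nonneg) auto

lemma harm_diff_sums: "(\<lambda>k. 1 / real (Suc k) - 1 / real (Suc k + d)) sums Hn d"
proof -
  have "(\<lambda>k. \<Sum>i<d. 1 / real (k + 1 + i) - 1 / real (Suc k + 1 + i)) sums (\<Sum>i<d. 1 / real (Suc i))"
  proof (rule sums_sum)
    fix i assume "i \<in> {..<d}"
    have "(\<lambda>k. 1 / real (k + 1 + i)) \<longlonglongrightarrow> 0" by real_asymp
    from telescope_sums'[OF this] show "(\<lambda>k. 1 / real (k + 1 + i) - 1 / real (Suc k + 1 + i)) sums (1 / real (Suc i))"
      by simp
  qed
  moreover have "(\<Sum>i<d. 1 / real (k + 1 + i) - 1 / real (Suc k + 1 + i)) = 1 / real (Suc k) - 1 / real (Suc k + d)" for k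
  proof -
    have "(\<Sum>i<d. 1 / real (k + 1 + i) - 1 / real (k + 1 + Suc i)) = 1 / real (k + 1 + 0) - 1 / real (k + 1 + d)"
      by (rule sum_lessThan_telescope'[where f="\<lambda>i. 1 / real (k + 1 + i)"])
    thus ?thesis by (simp add: add_ac)
  qed
  ultimately show ?thesis by (simp add: Hn_def)
qed

lemma P3_fib:
  "((\<lambda>k. 1 / real k - 1 / real (k + d)) has_sum Hn d) {0<..}"
proof -
  have s: "(\<lambda>k. 1 / real (Suc k) - 1 / real (Suc k + d)) sums Hn d" by (rule harm_diff_sums)
  have nn: "1 / real (Suc k) - 1 / real (Suc k + d) \<ge> 0" for k
    by (simp add: frac_le)
  have "((\<lambda>k. 1 / real (Suc k) - 1 / real (Suc k + d)) has_sum Hn d) UNIV"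
    using s nn by (intro norm_summable_imp_has_sum) (auto simp: sums_summable)
  moreover have "bij_betw Suc UNIV {0<..}"
    by (rule bij_betwI[where g="\<lambda>k. k - 1"]) auto
  ultimately show ?thesis
    using has_sum_reindex_bij_betw[of Suc UNIV "{0<..}" "\<lambda>k. 1 / real k - 1 / real (k + d)"] by simp
qed

lemma zstar1:
  assumes "N \<ge> 3"
  shows "((\<lambda>d. Hn d / real d ^ N) has_sum double_zeta_star 1 N) {0<..}"
proof -
  define B where "B = {(k1::nat, k2::nat). 0 < k1 \<and> k1 \<le> k2}"
  define G where "G = (\<lambda>(k1::nat, k2::nat). 1 / (real k1 ^ 1 * real k2 ^ N))"
  have fib: "((\<lambda>l. G ((\<lambda>(d,l). (l,d)) (d,l))) has_sum Hn d / real d ^ N) {1..d}" for d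
  proof -
    have "(\<Sum>l\<in>{1..d}. G (l, d)) = (\<Sum>l\<in>{1..d}. 1 / real l) / real d ^ N"
      by (simp add: G_def sum_divide_distrib)
    also have "(\<Sum>l\<in>{1..d}. 1 / real l) = Hn d"
      unfolding Hn_def by (rule sum_bounds_lt_plus1[symmetric])
    finally show ?thesis by (intro has_sum_finiteI) auto
  qed
  have summ: "(\<lambda>d. Hn d / real d ^ N) summable_on {0<..}"
  proof (rule summable_on_comparison_test)
    show "(\<lambda>d::nat. 1 / real d ^ (N - 1)) summable_on {0<..}"
    proof -
      have "2 \<le> N - 1" using assms by simp
      from has_sum_imp_summable[OF zeta_has_sum[OF this]] show ?thesis .
    qed
    fix d :: nat assume d: "d \<in> {0<..}"
    show "0 \<le> Hn d / real d ^ N" using Hn_nonneg by simp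
    have "Hn d / real d ^ N \<le> real d / real d ^ N"
      using Hn_le by (intro divide_right_mono) auto
    also have "real d / real d ^ N = 1 / real d ^ (N - 1)"
    proof -
      have "real d ^ N = real d * real d ^ (N - 1)" using assms by (cases N) auto
      thus ?thesis using d by simp
    qed
    finally show "Hn d / real d ^ N \<le> 1 / real d ^ (N - 1)" .
  qed
  have sig: "(\<lambda>x. G ((\<lambda>(d,l). (l,d)) x)) summable_on Sigma {0<..} (\<lambda>d. {1..d})"
    by (rule summable_on_SigmaI[OF _ summ]) (use fib in \<open>auto simp: G_def\<close>)
  have hs: "((\<lambda>x. G ((\<lambda>(d,l). (l,d)) x)) has_sum infsum (\<lambda>d. Hn d / real d ^ N) {0<..}) (Sigma {0<..} (\<lambda>d. {1..d}))"
    by (rule has_sum_SigmaI[OF _ _ sig]) (use fib summ in auto)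
  have b: "bij_betw (\<lambda>(d,l). (l,d)) (Sigma {0<..} (\<lambda>d. {1..d})) B"
    by (rule bij_betwI[where g="\<lambda>(a,b). (b,a)"]) (auto simp: B_def)
  have "(G has_sum infsum (\<lambda>d. Hn d / real d ^ N) {0<..}) B"
    using hs has_sum_reindex_bij_betw[OF b, of G] by simp
  hence "double_zeta_star 1 N = infsum (\<lambda>d. Hn d / real d ^ N) {0<..}"
    unfolding double_zeta_star_def B_def G_def by (simp add: infsumI)
  thus ?thesis using summ by simp
qed

lemma P3_has_sum:
  assumes "N \<ge> 3"
  shows "((\<lambda>(d,k). (1 / real k - 1 / real (k + d)) / real d ^ N) has_sum double_zeta_star 1 N) ({0<..} \<times> {0<..})"
proof -
  have fib: "((\<lambda>k. (1 / real k - 1 / real (k + d)) / real d ^ N) has_sum Hn d / real d ^ N) {0<..}" for d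
    using has_sum_cmult_right[OF P3_fib[of d], of "1 / real d ^ N"] by (simp add: field_simps)
  have out: "((\<lambda>d. Hn d / real d ^ N) has_sum double_zeta_star 1 N) {0<..}" using zstar1[OF assms] .
  have sig: "(\<lambda>(d,k). (1 / real k - 1 / real (k + d)) / real d ^ N) summable_on Sigma {0<..} (\<lambda>_::nat. {0::nat<..})"
    by (rule summable_on_SigmaI[OF _ has_sum_imp_summable[OF out]]) (use fib in \<open>auto simp: frac_le\<close>)
  show ?thesis
    by (rule has_sum_SigmaI[OF _ out sig]) (use fib in auto)
qed



lemma alg_helper:
  fixes s c D x y :: real
  assumes "D \<noteq> 0" "x \<noteq> 0" "y \<noteq> 0"
  shows "s * c / (D * x) + (- s) * (c / (D * y)) = s * c * ((1 / x - 1 / y) / D)"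
  using assms by (simp add: field_simps)

lemma pointwise:
  fixes d k :: nat
  assumes "d > 0" "k > 0" and m: "m = Suc a" and n: "n = Suc b"
  shows "1 / (real k ^ m * real (k + d) ^ n) =
    (\<Sum>i<a. (-1) ^ i * real ((n + i - 1) choose i) * (1 / (real d ^ (n + i) * real k ^ (m - i))))
    + (-1) ^ m * (\<Sum>j<b. real ((m + j - 1) choose j) * (1 / (real d ^ (m + j) * real (k + d) ^ (n - j))))
    + (-1) ^ a * real ((a + b) choose a) * ((1 / real k - 1 / real (k + d)) / real d ^ (a + b + 1))"
proof -
  have pf: "1 / (real k ^ m * (real k + real d) ^ n) =
    (\<Sum>i<m. (-1) ^ i * real ((n + i - 1) choose i) / (real d ^ (n + i) * real k ^ (m - i)))
    + (-1) ^ m * (\<Sum>j<n. real ((m + j - 1) choose j) / (real d ^ (m + j) * (real k + real d) ^ (n - j)))"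
    using assms by (intro partial_fraction) auto
  have s1: "(\<Sum>i<m. (-1) ^ i * real ((n + i - 1) choose i) / (real d ^ (n + i) * real k ^ (m - i)))
     = (\<Sum>i<a. (-1) ^ i * real ((n + i - 1) choose i) * (1 / (real d ^ (n + i) * real k ^ (m - i))))
       + (-1) ^ a * real ((a + b) choose a) / (real d ^ (a + b + 1) * real k)"
    by (simp add: m n add_ac)
  have s2: "(\<Sum>j<n. real ((m + j - 1) choose j) / (real d ^ (m + j) * (real k + real d) ^ (n - j)))
     = (\<Sum>j<b. real ((m + j - 1) choose j) * (1 / (real d ^ (m + j) * real (k + d) ^ (n - j))))
       + real ((a + b) choose a) / (real d ^ (a + b + 1) * real (k + d))"
  proof -
    have "(a + b) choose b = (a + b) choose a" using binomial_symmetric[of b "a + b"] by simp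
    thus ?thesis by (simp add: m n add_ac)
  qed
  have "(-1) ^ a * real ((a + b) choose a) / (real d ^ (a + b + 1) * real k)
        + (-1) ^ m * (real ((a + b) choose a) / (real d ^ (a + b + 1) * real (k + d)))
      = (-1) ^ a * real ((a + b) choose a) * ((1 / real k - 1 / real (k + d)) / real d ^ (a + b + 1))"
  proof -
    have "(-1::real) ^ m = - ((-1) ^ a)" by (simp add: m)
    moreover have "real d ^ (a + b + 1) \<noteq> 0" "real k \<noteq> 0" "real (k + d) \<noteq> 0" using assms by auto
    ultimately show ?thesis using alg_helper by metis
  qed
  with pf s1 s2 show ?thesis by (simp add: algebra_simps)
qed

lemma real_identity:
  assumes m: "m = Suc a" and n: "n = Suc b" and a: "a \<ge> 1" and b: "b \<ge> 1"
  shows "double_zeta m n =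
    (\<Sum>i<a. (-1) ^ i * real ((n + i - 1) choose i) * (zeta (n + i) * zeta (m - i)))
    + (-1) ^ m * (\<Sum>j<b. real ((m + j - 1) choose j) * double_zeta (m + j) (n - j))
    + (-1) ^ a * real ((a + b) choose a) * double_zeta_star 1 (a + b + 1)"
proof -
  define P where "P = ({0<..} \<times> {0<..} :: (nat \<times> nat) set)"
  have h1: "((\<lambda>x. \<Sum>i<a. (-1) ^ i * real ((n + i - 1) choose i) *
        (1 / (real (fst x) ^ (n + i) * real (snd x) ^ (m - i))))
      has_sum (\<Sum>i<a. (-1) ^ i * real ((n + i - 1) choose i) * (zeta (n + i) * zeta (m - i)))) P"
  proof (rule has_sum_sum_fin)
    fix i assume i: "i \<in> {..<a}"
    have "((\<lambda>(x, y). 1 / (real x ^ (n + i) * real y ^ (m - i))) has_sum zeta (n + i) * zeta (m - i)) P"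
      unfolding P_def using i m n b by (intro prod_has_sum) auto
    hence "((\<lambda>x. 1 / (real (fst x) ^ (n + i) * real (snd x) ^ (m - i))) has_sum zeta (n + i) * zeta (m - i)) P"
      by (simp add: case_prod_unfold)
    thus "((\<lambda>x. (-1) ^ i * real ((n + i - 1) choose i) * (1 / (real (fst x) ^ (n + i) * real (snd x) ^ (m - i))))
        has_sum ((-1) ^ i * real ((n + i - 1) choose i) * (zeta (n + i) * zeta (m - i)))) P"
      by (rule has_sum_cmult_right)
  qed simp
  have h2: "((\<lambda>x. (-1) ^ m * (\<Sum>j<b. real ((m + j - 1) choose j) *
        (1 / (real (fst x) ^ (m + j) * real (snd x + fst x) ^ (n - j)))))
      has_sum ((-1) ^ m * (\<Sum>j<b. real ((m + j - 1) choose j) * double_zeta (m + j) (n - j)))) P"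
  proof (rule has_sum_cmult_right, rule has_sum_sum_fin)
    fix j assume j: "j \<in> {..<b}"
    have "((\<lambda>(d, k). 1 / (real d ^ (m + j) * real (k + d) ^ (n - j))) has_sum double_zeta (m + j) (n - j)) P"
      unfolding P_def using j m n a b by (intro P2_has_sum) auto
    hence "((\<lambda>x. 1 / (real (fst x) ^ (m + j) * real (snd x + fst x) ^ (n - j))) has_sum double_zeta (m + j) (n - j)) P"
      by (simp add: case_prod_unfold)
    thus "((\<lambda>x. real ((m + j - 1) choose j) * (1 / (real (fst x) ^ (m + j) * real (snd x + fst x) ^ (n - j))))
        has_sum (real ((m + j - 1) choose j) * double_zeta (m + j) (n - j))) P"
      by (rule has_sum_cmult_right)
  qed simp
  have h3: "((\<lambda>x. (-1) ^ a * real ((a + b) choose a) * ((1 / real (snd x) - 1 / real (snd x + fst x)) / real (fst x) ^ (a + b + 1)))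
      has_sum ((-1) ^ a * real ((a + b) choose a) * double_zeta_star 1 (a + b + 1))) P"
  proof (rule has_sum_cmult_right)
    have "((\<lambda>(d,k). (1 / real k - 1 / real (k + d)) / real d ^ (a + b + 1)) has_sum double_zeta_star 1 (a + b + 1)) P"
      unfolding P_def using a b by (intro P3_has_sum) auto
    thus "((\<lambda>x. (1 / real (snd x) - 1 / real (snd x + fst x)) / real (fst x) ^ (a + b + 1)) has_sum double_zeta_star 1 (a + b + 1)) P"
      by (simp add: case_prod_unfold)
  qed
  have hall: "((\<lambda>x. 1 / (real (snd x) ^ m * real (snd x + fst x) ^ n)) has_sum
      ((\<Sum>i<a. (-1) ^ i * real ((n + i - 1) choose i) * (zeta (n + i) * zeta (m - i)))
    + (-1) ^ m * (\<Sum>j<b. real ((m + j - 1) choose j) * double_zeta (m + j) (n - j))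
    + (-1) ^ a * real ((a + b) choose a) * double_zeta_star 1 (a + b + 1))) P"
  proof -
    have "((\<lambda>x. (\<Sum>i<a. (-1) ^ i * real ((n + i - 1) choose i) *
        (1 / (real (fst x) ^ (n + i) * real (snd x) ^ (m - i))))
        + (-1) ^ m * (\<Sum>j<b. real ((m + j - 1) choose j) *
        (1 / (real (fst x) ^ (m + j) * real (snd x + fst x) ^ (n - j))))
        + (-1) ^ a * real ((a + b) choose a) * ((1 / real (snd x) - 1 / real (snd x + fst x)) / real (fst x) ^ (a + b + 1)))
      has_sum
      ((\<Sum>i<a. (-1) ^ i * real ((n + i - 1) choose i) * (zeta (n + i) * zeta (m - i)))
    + (-1) ^ m * (\<Sum>j<b. real ((m + j - 1) choose j) * double_zeta (m + j) (n - j))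
    + (-1) ^ a * real ((a + b) choose a) * double_zeta_star 1 (a + b + 1))) P"
      by (intro has_sum_add h1 h2 h3)
    moreover have "\<And>x. x \<in> P \<Longrightarrow> 1 / (real (snd x) ^ m * real (snd x + fst x) ^ n) =
        (\<Sum>i<a. (-1) ^ i * real ((n + i - 1) choose i) *
        (1 / (real (fst x) ^ (n + i) * real (snd x) ^ (m - i))))
        + (-1) ^ m * (\<Sum>j<b. real ((m + j - 1) choose j) *
        (1 / (real (fst x) ^ (m + j) * real (snd x + fst x) ^ (n - j))))
        + (-1) ^ a * real ((a + b) choose a) * ((1 / real (snd x) - 1 / real (snd x + fst x)) / real (fst x) ^ (a + b + 1))"
      unfolding P_def using m n by (intro pointwise) auto
    ultimately show ?thesis using has_sum_cong by (smt (verit))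
  qed
  have bij: "bij_betw (\<lambda>x. (snd x, snd x + fst x)) P {(k1::nat, k2::nat). 0 < k1 \<and> k1 < k2}"
    unfolding P_def by (rule bij_betwI[where g="\<lambda>(a,b). (b - a, a)"]) auto
  have "((\<lambda>(k1, k2). 1 / (real k1 ^ m * real k2 ^ n)) has_sum
      ((\<Sum>i<a. (-1) ^ i * real ((n + i - 1) choose i) * (zeta (n + i) * zeta (m - i)))
    + (-1) ^ m * (\<Sum>j<b. real ((m + j - 1) choose j) * double_zeta (m + j) (n - j))
    + (-1) ^ a * real ((a + b) choose a) * double_zeta_star 1 (a + b + 1))) {(k1::nat, k2::nat). 0 < k1 \<and> k1 < k2}"
    using has_sum_reindex_bij_betw[OF bij, of "\<lambda>(k1, k2). 1 / (real k1 ^ m * real k2 ^ n)"] hall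
    by simp
  thus ?thesis unfolding double_zeta_def by (rule infsumI)
qed



lemma coeff_zeta_sh:
  assumes "p \<ge> 1"
  shows "coeff (zeta_sh p) k = (if p = 1 then (if k = 1 then 1 else 0) else (if k = 0 then zeta p else 0))"
proof (cases "p = 1")
  case True
  then show ?thesis by (simp only: True zeta_sh_1) (simp add: coeff_pCons split: nat.split)
next
  case False
  with assms have "p \<ge> 2" by simp
  then show ?thesis using False by (simp add: zeta_sh_ge2 coeff_pCons split: nat.split)
qed

theorem theorem2p3:
  fixes m n :: nat
  assumes "m > 1" and "n > 1"
  shows "[: double_zeta m n :] =
    (\<Sum>i<m. smult ((-1) ^ i * real ((n + i - 1) choose i) * zeta (n + i)) (zeta_sh (m - i)))
    + smult ((-1) ^ m)
        (\<Sum>j<n. smult (real ((m + j - 1) choose j))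
           (smult (zeta (m + j)) (zeta_sh (n - j)) - [: double_zeta_star (n - j) (m + j) :]))"
proof -
  obtain a where m: "m = Suc a" and a: "a \<ge> 1" using assms(1) by (cases m) auto
  obtain b where n: "n = Suc b" and b: "b \<ge> 1" using assms(2) by (cases n) auto
  show ?thesis
  proof (rule poly_eqI)
    fix k :: nat
    have R: "coeff ((\<Sum>i<m. smult ((-1) ^ i * real ((n + i - 1) choose i) * zeta (n + i)) (zeta_sh (m - i)))
    + smult ((-1) ^ m)
        (\<Sum>j<n. smult (real ((m + j - 1) choose j))
           (smult (zeta (m + j)) (zeta_sh (n - j)) - [: double_zeta_star (n - j) (m + j) :]))) k
      = (\<Sum>i<m. (-1) ^ i * real ((n + i - 1) choose i) * zeta (n + i) * coeff (zeta_sh (m - i)) k)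
        + (-1) ^ m * (\<Sum>j<n. real ((m + j - 1) choose j) *
            (zeta (m + j) * coeff (zeta_sh (n - j)) k - (if k = 0 then double_zeta_star (n - j) (m + j) else 0)))"
    proof -
      have cc: "\<And>c k. coeff [:c:] k = (if k = 0 then c else 0)" by (simp add: coeff_pCons split: nat.split)
      show ?thesis by (simp add: coeff_sum cc)
    qed
    have S1: "(\<Sum>i<m. (-1) ^ i * real ((n + i - 1) choose i) * zeta (n + i) * coeff (zeta_sh (m - i)) k)
      = (if k = 0 then (\<Sum>i<a. (-1) ^ i * real ((n + i - 1) choose i) * (zeta (n + i) * zeta (m - i))) else 0)
        + (-1) ^ a * real ((a + b) choose a) * zeta (a + b + 1) * (if k = 1 then 1 else 0)"
    proof -
      have "(\<Sum>i<a. (-1) ^ i * real ((n + i - 1) choose i) * zeta (n + i) * coeff (zeta_sh (m - i)) k)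
          = (\<Sum>i<a. (if k = 0 then (-1) ^ i * real ((n + i - 1) choose i) * (zeta (n + i) * zeta (m - i)) else 0))"
        by (intro sum.cong refl) (auto simp: coeff_zeta_sh m)
      also have "\<dots> = (if k = 0 then (\<Sum>i<a. (-1) ^ i * real ((n + i - 1) choose i) * (zeta (n + i) * zeta (m - i))) else 0)"
        by simp
      finally have "(\<Sum>i<a. (-1) ^ i * real ((n + i - 1) choose i) * zeta (n + i) * coeff (zeta_sh (m - i)) k) = \<dots>" .
      moreover have "coeff (zeta_sh (m - a)) k = (if k = 1 then 1 else 0)" by (simp add: m coeff_zeta_sh)
      moreover have "n + a - 1 = a + b" "n + a = a + b + 1" by (simp_all add: n)
      ultimately show ?thesis by (simp add: m) (metis add.commute)
    qed
    have S2: "(\<Sum>j<n. real ((m + j - 1) choose j) *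
            (zeta (m + j) * coeff (zeta_sh (n - j)) k - (if k = 0 then double_zeta_star (n - j) (m + j) else 0)))
      = (if k = 0 then (\<Sum>j<b. real ((m + j - 1) choose j) * double_zeta (m + j) (n - j)) else 0)
        + real ((a + b) choose a) * (zeta (a + b + 1) * (if k = 1 then 1 else 0)
            - (if k = 0 then double_zeta_star 1 (a + b + 1) else 0))"
    proof -
      have "(\<Sum>j<b. real ((m + j - 1) choose j) *
            (zeta (m + j) * coeff (zeta_sh (n - j)) k - (if k = 0 then double_zeta_star (n - j) (m + j) else 0)))
          = (\<Sum>j<b. (if k = 0 then real ((m + j - 1) choose j) * double_zeta (m + j) (n - j) else 0))"
      proof (intro sum.cong refl)
        fix j assume j: "j \<in> {..<b}"
        have st: "double_zeta (m + j) (n - j) + double_zeta_star (n - j) (m + j) = zeta (m + j) * zeta (n - j)"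
          using j m n a by (intro stuffle(1)) auto
        have nj: "n - j \<noteq> 1" "n - j \<ge> 1" using j n by auto
        show "real ((m + j - 1) choose j) *
            (zeta (m + j) * coeff (zeta_sh (n - j)) k - (if k = 0 then double_zeta_star (n - j) (m + j) else 0))
          = (if k = 0 then real ((m + j - 1) choose j) * double_zeta (m + j) (n - j) else 0)"
        proof (cases "k = 0")
          case True
          have E: "zeta (m + j) * zeta (n - j) - double_zeta_star (n - j) (m + j) = double_zeta (m + j) (n - j)"
            using st by (simp add: mult.commute)
          have "coeff (zeta_sh (n - j)) k = zeta (n - j)" using True nj by (simp add: coeff_zeta_sh)
          then show ?thesis using True E by simp
        next
          case False
          have "coeff (zeta_sh (n - j)) k = 0" using False nj by (simp add: coeff_zeta_sh)
          then show ?thesis using False by simp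
        qed
      qed
      also have "\<dots> = (if k = 0 then (\<Sum>j<b. real ((m + j - 1) choose j) * double_zeta (m + j) (n - j)) else 0)"
        by simp
      finally have "(\<Sum>j<b. real ((m + j - 1) choose j) *
            (zeta (m + j) * coeff (zeta_sh (n - j)) k - (if k = 0 then double_zeta_star (n - j) (m + j) else 0))) = \<dots>" .
      moreover have "coeff (zeta_sh (n - b)) k = (if k = 1 then 1 else 0)" by (simp add: n coeff_zeta_sh)
      moreover have "m + b - 1 = a + b" "m + b = a + b + 1" "n - b = 1" by (simp_all add: m n)
      moreover have "(a + b) choose b = (a + b) choose a" using binomial_symmetric[of b "a + b"] by simp
      ultimately show ?thesis by (simp add: n)
    qed
    have RI: "double_zeta m n =
      (\<Sum>i<a. (-1) ^ i * real ((n + i - 1) choose i) * (zeta (n + i) * zeta (m - i)))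
      + (-1) ^ m * (\<Sum>j<b. real ((m + j - 1) choose j) * double_zeta (m + j) (n - j))
      + (-1) ^ a * real ((a + b) choose a) * double_zeta_star 1 (a + b + 1)"
      using m n a b by (rule real_identity)
    have sg: "(-1::real) ^ m = - ((-1) ^ a)" by (simp add: m)
    have G: "coeff [: double_zeta m n :] k =
        ((if k = 0 then (\<Sum>i<a. (-1) ^ i * real ((n + i - 1) choose i) * (zeta (n + i) * zeta (m - i))) else 0)
        + (-1) ^ a * real ((a + b) choose a) * zeta (a + b + 1) * (if k = 1 then 1 else 0))
        + (-1) ^ m * ((if k = 0 then (\<Sum>j<b. real ((m + j - 1) choose j) * double_zeta (m + j) (n - j)) else 0)
        + real ((a + b) choose a) * (zeta (a + b + 1) * (if k = 1 then 1 else 0)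
            - (if k = 0 then double_zeta_star 1 (a + b + 1) else 0)))"
    proof (cases "k = 0")
      case True
      then show ?thesis by (subst RI) (simp add: sg algebra_simps)
    next
      case False
      then show ?thesis by (cases "k = 1") (simp_all add: sg coeff_pCons split: nat.split)
    qed
    show "coeff [: double_zeta m n :] k = coeff ((\<Sum>i<m. smult ((-1) ^ i * real ((n + i - 1) choose i) * zeta (n + i)) (zeta_sh (m - i)))
    + smult ((-1) ^ m)
        (\<Sum>j<n. smult (real ((m + j - 1) choose j))
           (smult (zeta (m + j)) (zeta_sh (n - j)) - [: double_zeta_star (n - j) (m + j) :]))) k"
      by (simp only: R S1 S2 G)
  qed
qed


end
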